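(* Let $A\in\mathbb{R}^{n\times d}$ have rows $\boldsymbol{a}_i^\top$, $\lambda>0$, let each $f_i$ be convex with conjugate $f_i^*$, and let $g$ be $\mu$-strongly convex and $L$-smooth. Let $\boldsymbol{x}^{(t)}$ with $\|\boldsymbol{x}^{(t)}\|_1\le\lambda$ and $\boldsymbol{y}^{(t)}\in\mathbb{R}^n$ be given, let $\bar{\boldsymbol{x}}^{(t)}=\arg\min_{\|\boldsymbol{x}\|_1\le\lambda}\mathcal{L}(\boldsymbol{x},\boldsymbol{y}^{(t)})$, let $s\ge\|\bar{\boldsymbol{x}}^{(t)}\|_0$ be an integer and $\eta=\frac{\mu}{2L}$, and define $\tilde{\boldsymbol{x}}\in\arg\min_{\|\boldsymbol{x}\|_1\le\lambda,\ \|\boldsymbol{x}\|_0\le s}\{\langle\frac1nA^\top\boldsymbol{y}^{(t)}+\nabla g(\boldsymbol{x}^{(t)}),\boldsymbol{x}\rangle+\frac L2\eta\|\boldsymbol{x}-\boldsymbol{x}^{(t)}\|^2\}$ and $\boldsymbol{x}^{(t+1)}=(1-\eta)\boldsymbol{x}^{(t)}+\eta\tilde{\boldsymbol{x}}$. Then $$\mathcal{L}(\boldsymbol{x}^{(t+1)},\boldsymbol{y}^{(t)})-\mathcal{L}(\bar{\boldsymbol{x}}^{(t)},\boldsymbol{y}^{(t)})\le\Big(1-\frac\eta2\Big)\Big(\mathcal{L}(\boldsymbol{x}^{(t)},\boldsymbol{y}^{(t)})-\mathcal{L}(\bar{\boldsymbol{x}}^{(t)},\boldsymbol{y}^{(t)})\Big),$$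 equivalently $(1-\frac\eta2)\big(\mathcal{L}(\boldsymbol{x}^{(t+1)},\boldsymbol{y}^{(t)})-\mathcal{L}(\boldsymbol{x}^{(t)},\boldsymbol{y}^{(t)})\big)\le-\frac\eta2\Delta_p^{(t)}$.
   Context: $\mathcal{L}(\boldsymbol{x},\boldsymbol{y})=g(\boldsymbol{x})+\frac1n\langle\boldsymbol{y},A\boldsymbol{x}\rangle-\frac1n\sum_{i=1}^nf_i^*(y_i)$. $\Delta_p^{(t)}=\mathcal{L}(\boldsymbol{x}^{(t+1)},\boldsymbol{y}^{(t)})-\mathcal{L}(\bar{\boldsymbol{x}}^{(t)},\boldsymbol{y}^{(t)})$. This is the primal step of the Primal-Dual Block Frank-Wolfe algorithm for the $\ell_1$ ball. *)

theory Defs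
  imports "HOL-Analysis.Analysis"
begin

definition conjugate :: "(real \<Rightarrow> real) \<Rightarrow> real \<Rightarrow> ereal" where
  "conjugate f y = (SUP x. ereal (x * y - f x))"

definition strongly_convex :: "real \<Rightarrow> ('a::real_normed_vector \<Rightarrow> real) \<Rightarrow> bool" where
  "strongly_convex mu g \<longleftrightarrow> (\<forall>x y t. 0 \<le> t \<and> t \<le> 1 \<longrightarrow>
      g (t *\<^sub>R x + (1 - t) *\<^sub>R y) \<le> t * g x + (1 - t) * g y - mu / 2 * t * (1 - t) * (norm (x - y))\<^sup>2)"

definition is_gradient :: "('a::real_inner \<Rightarrow> real) \<Rightarrow> ('a \<Rightarrow> 'a) \<Rightarrow> bool" where
  "is_gradient g G \<longleftrightarrow> (\<forall>x. (g has_derivative (\<lambda>h. G x \<bullet> h)) (at x))"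

definition smooth_with_gradient :: "real \<Rightarrow> ('a::real_inner \<Rightarrow> real) \<Rightarrow> ('a \<Rightarrow> 'a) \<Rightarrow> bool" where
  "smooth_with_gradient L g G \<longleftrightarrow> is_gradient g G \<and> (\<forall>x y. norm (G x - G y) \<le> L * norm (x - y))"

definition norm1 :: "real ^ 'd \<Rightarrow> real" where
  "norm1 x = (\<Sum>i\<in>UNIV. \<bar>x $ i\<bar>)"

definition norm0 :: "real ^ 'd \<Rightarrow> nat" where
  "norm0 x = card {i. x $ i \<noteq> 0}"

text \<open>The saddle function L(x,y) = g x + (1/n) <y, A x> - (1/n) sum_i f_i^*(y_i).
  The conjugate values are assumed finite where used.\<close>
definition lagr :: "(real ^ 'd \<Rightarrow> real) \<Rightarrow> ('n::finite \<Rightarrow> real \<Rightarrow> real) \<Rightarrow> real ^ 'd ^ 'n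
      \<Rightarrow> real ^ 'd \<Rightarrow> real ^ 'n \<Rightarrow> real" where
  "lagr g f A x y = g x + (1 / real CARD('n)) * (y \<bullet> (A *v x))
      - (1 / real CARD('n)) * (\<Sum>i\<in>UNIV. real_of_ereal (conjugate (f i) (y $ i)))"

end

theory Submission
  imports Defs
begin

lemma line_deriv:
  fixes g :: "real ^ 'd \<Rightarrow> real"
  assumes "is_gradient g G"
  shows "((\<lambda>t. g (x + t *\<^sub>R d)) has_real_derivative (G (x + t *\<^sub>R d) \<bullet> d)) (at t)"
proof -
  have g: "(g has_derivative (\<lambda>h. G (x + t *\<^sub>R d) \<bullet> h)) (at (x + t *\<^sub>R d))"
    using assms unfolding is_gradient_def by blast
  have l: "((\<lambda>t. x + t *\<^sub>R d) has_derivative (\<lambda>s. s *\<^sub>R d)) (at t)"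
    by (auto intro!: derivative_eq_intros)
  have "((\<lambda>t. g (x + t *\<^sub>R d)) has_derivative (\<lambda>s. G (x + t *\<^sub>R d) \<bullet> (s *\<^sub>R d))) (at t)"
    using has_derivative_compose[OF l g] by (simp add: o_def)
  moreover have "(\<lambda>s. G (x + t *\<^sub>R d) \<bullet> (s *\<^sub>R d)) = (*) (G (x + t *\<^sub>R d) \<bullet> d)"
    by (auto simp: mult.commute)
  ultimately show ?thesis unfolding has_field_derivative_def by simp
qed

lemma descent_bounds:
  fixes g :: "real ^ 'd \<Rightarrow> real"
  assumes "smooth_with_gradient L g G" and t: "t \<ge> 0"
  shows "g (x + t *\<^sub>R d) \<le> g x + t * (G x \<bullet> d) + L * t\<^sup>2 / 2 * (norm d)\<^sup>2"
    and "g (x + t *\<^sub>R d) \<ge> g x + t * (G x \<bullet> d) - L * t\<^sup>2 / 2 * (norm d)\<^sup>2"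
proof -
  have gr: "is_gradient g G" and lip: "\<And>a b. norm (G a - G b) \<le> L * norm (a - b)"
    using assms unfolding smooth_with_gradient_def by auto
  have cs: "\<bar>(G (x + s *\<^sub>R d) - G x) \<bullet> d\<bar> \<le> L * s * (norm d)\<^sup>2" if "s \<ge> 0" for s
  proof -
    have "\<bar>(G (x + s *\<^sub>R d) - G x) \<bullet> d\<bar> \<le> norm (G (x + s *\<^sub>R d) - G x) * norm d"
      by (rule Cauchy_Schwarz_ineq2)
    also have "\<dots> \<le> L * norm (s *\<^sub>R d) * norm d"
      using lip[of "x + s *\<^sub>R d" x] by (simp add: mult_right_mono)
    also have "\<dots> = L * s * (norm d)\<^sup>2" using that by (simp add: power2_eq_square)
    finally show ?thesis .
  qed
  have "(\<lambda>s. g (x + s *\<^sub>R d) - s * (G x \<bullet> d) - L * s\<^sup>2 / 2 * (norm d)\<^sup>2) t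
      \<le> (\<lambda>s. g (x + s *\<^sub>R d) - s * (G x \<bullet> d) - L * s\<^sup>2 / 2 * (norm d)\<^sup>2) 0"
  proof (rule DERIV_nonpos_imp_nonincreasing[OF t])
    fix s :: real assume s: "0 \<le> s" "s \<le> t"
    show "\<exists>y. ((\<lambda>s. g (x + s *\<^sub>R d) - s * (G x \<bullet> d) - L * s\<^sup>2 / 2 * (norm d)\<^sup>2) has_real_derivative y) (at s) \<and> y \<le> 0"
      apply (rule exI[of _ "G (x + s *\<^sub>R d) \<bullet> d - G x \<bullet> d - L * s * (norm d)\<^sup>2"])
      apply (rule conjI)
       apply (auto intro!: derivative_eq_intros line_deriv[OF gr])[1]
      using cs[of s] s by (simp add: inner_diff_left)
  qed
  then show "g (x + t *\<^sub>R d) \<le> g x + t * (G x \<bullet> d) + L * t\<^sup>2 / 2 * (norm d)\<^sup>2" by simp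
  have "(\<lambda>s. g (x + s *\<^sub>R d) - s * (G x \<bullet> d) + L * s\<^sup>2 / 2 * (norm d)\<^sup>2) 0
      \<le> (\<lambda>s. g (x + s *\<^sub>R d) - s * (G x \<bullet> d) + L * s\<^sup>2 / 2 * (norm d)\<^sup>2) t"
  proof (rule DERIV_nonneg_imp_nondecreasing[OF t])
    fix s :: real assume s: "0 \<le> s" "s \<le> t"
    show "\<exists>y. ((\<lambda>s. g (x + s *\<^sub>R d) - s * (G x \<bullet> d) + L * s\<^sup>2 / 2 * (norm d)\<^sup>2) has_real_derivative y) (at s) \<and> y \<ge> 0"
      apply (rule exI[of _ "G (x + s *\<^sub>R d) \<bullet> d - G x \<bullet> d + L * s * (norm d)\<^sup>2"])
      apply (rule conjI)
       apply (auto intro!: derivative_eq_intros line_deriv[OF gr])[1]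
      using cs[of s] s by (simp add: inner_diff_left)
  qed
  then show "g (x + t *\<^sub>R d) \<ge> g x + t * (G x \<bullet> d) - L * t\<^sup>2 / 2 * (norm d)\<^sup>2" by simp
qed

lemma small_t:
  fixes a b c :: real
  assumes b: "b \<ge> 0" and h: "\<And>t. 0 < t \<Longrightarrow> t \<le> 1 \<Longrightarrow> a - t * b \<le> c"
  shows "a \<le> c"
proof (rule ccontr)
  assume "\<not> a \<le> c"
  then have p: "a - c > 0" by simp
  define t where "t = (a - c) / (a - c + b)"
  have t0: "0 < t" and t1: "t \<le> 1" using p b by (auto simp: t_def field_simps)
  have q: "b / (a - c + b) < 1" using p b by simp
  have "t * b = (a - c) * (b / (a - c + b))" by (simp add: t_def)
  also have "\<dots> < (a - c) * 1" by (rule mult_strict_left_mono[OF q p])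
  finally have "t * b < a - c" by simp
  with h[OF t0 t1] show False by simp
qed

lemma sc_first:
  fixes g :: "real ^ 'd \<Rightarrow> real"
  assumes sm: "smooth_with_gradient L g G" and L: "L > 0" and mu: "mu > 0" and sc: "strongly_convex mu g"
  shows "g y \<ge> g x + G x \<bullet> (y - x) + mu / 2 * (norm (y - x))\<^sup>2"
proof -
  define d where "d = y - x"
  have "G x \<bullet> d + mu / 2 * (norm d)\<^sup>2 \<le> g y - g x"
  proof (rule small_t[where b = "(L / 2 + mu / 2) * (norm d)\<^sup>2"])
    show "0 \<le> (L / 2 + mu / 2) * (norm d)\<^sup>2" using L mu by simp
    fix t :: real assume t: "0 < t" "t \<le> 1"
    have e: "x + t *\<^sub>R d = t *\<^sub>R y + (1 - t) *\<^sub>R x" by (simp add: d_def algebra_simps)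
    have u: "g (x + t *\<^sub>R d) \<le> t * g y + (1 - t) * g x - mu / 2 * t * (1 - t) * (norm d)\<^sup>2"
    proof -
      have "g (t *\<^sub>R y + (1 - t) *\<^sub>R x) \<le> t * g y + (1 - t) * g x - mu / 2 * t * (1 - t) * (norm (y - x))\<^sup>2"
        using sc t unfolding strongly_convex_def by auto
      then show ?thesis unfolding e[symmetric] d_def[symmetric] .
    qed
    have l: "g (x + t *\<^sub>R d) \<ge> g x + t * (G x \<bullet> d) - L * t\<^sup>2 / 2 * (norm d)\<^sup>2"
      using descent_bounds(2)[OF sm, of t x d] t by simp
    have "t * (G x \<bullet> d + mu / 2 * (norm d)\<^sup>2 - t * ((L / 2 + mu / 2) * (norm d)\<^sup>2)) \<le> t * (g y - g x)"
      using u l by (simp add: algebra_simps power2_eq_square diff_divide_distrib add_divide_distrib)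
    then show "G x \<bullet> d + mu / 2 * (norm d)\<^sup>2 - t * ((L / 2 + mu / 2) * (norm d)\<^sup>2) \<le> g y - g x"
      using t by simp
  qed
  then show ?thesis by (simp add: d_def)
qed

lemma lagr_eq:
  "lagr g f A x y = g x + ((1 / real CARD('n)) *\<^sub>R (transpose A *v y)) \<bullet> x
      - (1 / real CARD('n)) * (\<Sum>i\<in>UNIV. real_of_ereal (conjugate (f i) (y $ i)))"
  for A :: "real ^ 'd ^ 'n::finite"
proof -
  have "(transpose A *v y) \<bullet> x = y \<bullet> (A *v x)"
    by (simp add: dot_lmul_matrix)
  then show ?thesis unfolding lagr_def by simp
qed

theorem lemma1:
  fixes A :: "real ^ 'd ^ 'n"
    and f :: "'n \<Rightarrow> real \<Rightarrow> real"
    and g :: "real ^ 'd \<Rightarrow> real"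
    and G :: "real ^ 'd \<Rightarrow> real ^ 'd"
    and lam mu L :: real
    and s :: nat
    and xt xbar xtil :: "real ^ 'd"
    and yt :: "real ^ 'n"
  assumes lam_pos: "lam > 0"
    and f_convex: "\<And>i. convex_on UNIV (f i)"
    and fstar_finite: "\<And>i. conjugate (f i) (yt $ i) < \<infinity>"
    and mu_pos: "mu > 0"
    and g_sc: "strongly_convex mu g"
    and L_pos: "L > 0"
    and g_smooth: "smooth_with_gradient L g G"
    and xt_feas: "norm1 xt \<le> lam"
    and xbar_feas: "norm1 xbar \<le> lam"
    and xbar_min: "\<And>x. norm1 x \<le> lam \<Longrightarrow> lagr g f A xbar yt \<le> lagr g f A x yt"
    and s_ge: "s \<ge> norm0 xbar"
    and xtil_feas: "norm1 xtil \<le> lam" "norm0 xtil \<le> s"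
    and xtil_min: "\<And>x. norm1 x \<le> lam \<Longrightarrow> norm0 x \<le> s \<Longrightarrow>
        ((1 / real CARD('n)) *\<^sub>R (transpose A *v yt) + G xt) \<bullet> xtil
          + L / 2 * (mu / (2 * L)) * (norm (xtil - xt))\<^sup>2
        \<le> ((1 / real CARD('n)) *\<^sub>R (transpose A *v yt) + G xt) \<bullet> x
          + L / 2 * (mu / (2 * L)) * (norm (x - xt))\<^sup>2"
  shows "lagr g f A ((1 - mu / (2 * L)) *\<^sub>R xt + (mu / (2 * L)) *\<^sub>R xtil) yt - lagr g f A xbar yt
         \<le> (1 - (mu / (2 * L)) / 2) * (lagr g f A xt yt - lagr g f A xbar yt)"
proof -
  define eta where "eta = mu / (2 * L)"
  define c where "c = (1 / real CARD('n)) *\<^sub>R (transpose A *v yt)"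
  define K where "K = (1 / real CARD('n)) * (\<Sum>i\<in>UNIV. real_of_ereal (conjugate (f i) (yt $ i)))"
  define v where "v = c + G xt"
  define d where "d = xtil - xt"
  define e where "e = xbar - xt"
  define P where "P = (\<lambda>x. g x + c \<bullet> x)"
  have lg: "\<And>x. lagr g f A x yt = P x - K" unfolding P_def c_def K_def by (rule lagr_eq)
  have eta_pos: "eta > 0" using mu_pos L_pos by (simp add: eta_def)
  have Le: "L * eta / 2 = mu / 4" using L_pos by (simp add: eta_def)
  have xnew: "(1 - eta) *\<^sub>R xt + eta *\<^sub>R xtil = xt + eta *\<^sub>R d"
    by (simp add: d_def algebra_simps)
  have s1: "g (xt + eta *\<^sub>R d) \<le> g xt + eta * (G xt \<bullet> d) + L * eta\<^sup>2 / 2 * (norm d)\<^sup>2"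
    using descent_bounds(1)[OF g_smooth, of eta xt d] eta_pos by simp
  have s2: "g xbar \<ge> g xt + G xt \<bullet> e + mu / 2 * (norm e)\<^sup>2"
    using sc_first[OF g_smooth L_pos mu_pos g_sc, of xt xbar] by (simp add: e_def)
  have s3: "v \<bullet> xtil + L / 2 * eta * (norm d)\<^sup>2 \<le> v \<bullet> xbar + L / 2 * eta * (norm e)\<^sup>2"
    using xtil_min[OF xbar_feas] s_ge by (simp add: v_def c_def eta_def d_def e_def)
  have s3': "v \<bullet> d + mu / 4 * (norm d)\<^sup>2 \<le> v \<bullet> e + mu / 4 * (norm e)\<^sup>2"
    using s3 Le by (simp add: d_def e_def inner_diff_right)
  have s4: "P xbar \<le> P xt" using xbar_min[OF xt_feas] lg by simp
  have s5: "v \<bullet> e + mu / 4 * (norm e)\<^sup>2 \<le> P xbar - P xt"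
  proof -
    have "v \<bullet> e = c \<bullet> e + G xt \<bullet> e" by (simp add: v_def inner_add_left)
    moreover have "c \<bullet> e = c \<bullet> xbar - c \<bullet> xt" by (simp add: e_def inner_diff_right)
    moreover have "mu / 4 * (norm e)\<^sup>2 \<le> mu / 2 * (norm e)\<^sup>2"
      using mu_pos by (intro mult_right_mono) auto
    ultimately show ?thesis using s2 unfolding P_def by linarith
  qed
  have s6: "eta * (v \<bullet> d + mu / 4 * (norm d)\<^sup>2) \<le> eta * (P xbar - P xt)"
    using mult_left_mono[OF order_trans[OF s3' s5], of eta] eta_pos by simp
  have s7: "P (xt + eta *\<^sub>R d) \<le> P xt + eta * (v \<bullet> d + mu / 4 * (norm d)\<^sup>2)"
  proof -
    have "c \<bullet> (xt + eta *\<^sub>R d) = c \<bullet> xt + eta * (c \<bullet> d)" by (simp add: inner_add_right)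
    moreover have "L * eta\<^sup>2 / 2 * (norm d)\<^sup>2 = eta * (mu / 4 * (norm d)\<^sup>2)"
      using Le by (simp add: power2_eq_square algebra_simps)
    moreover have "eta * (v \<bullet> d + mu / 4 * (norm d)\<^sup>2) = eta * (c \<bullet> d) + eta * (G xt \<bullet> d) + eta * (mu / 4 * (norm d)\<^sup>2)"
      by (simp add: v_def inner_add_left algebra_simps)
    ultimately show ?thesis using s1 unfolding P_def by linarith
  qed
  have s8: "P (xt + eta *\<^sub>R d) - P xbar \<le> (1 - eta) * (P xt - P xbar)"
    using s6 s7 by (simp add: algebra_simps)
  have s9: "(1 - eta) * (P xt - P xbar) \<le> (1 - eta / 2) * (P xt - P xbar)"
    using s4 eta_pos by (intro mult_right_mono) auto
  show ?thesis
    unfolding eta_def[symmetric] xnew lg using s8 s9 by simp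
qed

end
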